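(* Let $(v_1,\dots,v_r)$ be a directed path in $H$ with $d(v_r)\ge1$. Let $Y=s(v_1)E_1\,s(v_2)E_2\cdots s(v_r)E_r$, where for $1\le i<r$, $E_i$ is the concatenation of all strings $e(v_i,w)$, $w$ ranging over the out-neighbors of $v_i$, listed in cyclic order and ending with $e(v_i,v_{i+1})$, and $E_r$ is the concatenation of all strings $e(v_r,w)$ listed in cyclic order starting from an arbitrary out-neighbor. Then the LZ77 parsing of $Y$ has exactly $3r+1+\sum_{i=1}^r d(v_i)$ phrases.
   Context: $H$ is a directed graph without loops in which no vertex has outdegree exactly 1; $d(v)$ denotes the outdegree of $v$. For each vertex $v$ introduce three symbols $v$, $v'$, $\$_v$; all these symbols are pairwise distinct (over all vertices). For a vertex $v$ with outdegree $d=d(v)\ge 1$, let $w_0,\dots,w_{d-1}$ be its out-neighbors in a fixed cyclic order (indices mod $d$); "cyclic order" refers to this order. Define $e(v,w_i)=(v'w_{i-1})^4v'w_i$ for $0\le i<d$ and $s(v)=v^4(v')^5\$_v$. LZ77 parsing of a string $z$: $z=z_1z_2\cdots z_t$ where, once $z_1,\dots,z_{i-1}$ are determined and the remaining suffix is nonempty, $z_i$ is the longest nonempty prefix $u$ of the remaining suffix such that $u^-$ ($u$ with its last symbol deleted) has an occurrence in $z$ starting at a position strictly smaller than the starting position of $u$ (the empty string always qualifies). The $z_i$ are the phrases. *)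

theory Defs
  imports Main
begin

text \<open>Symbols: for each vertex v the three symbols v, v' and $_v, pairwise distinct.\<close>
datatype 'v sym = Vx 'v | Pr 'v | Dl 'v

text \<open>The graph H is given by out-neighbour lists: N v lists the out-neighbours of v
  in the fixed cyclic order w_0, ..., w_{d-1}; d(v) = length (N v).\<close>

definition outdeg :: "('v \<Rightarrow> 'v list) \<Rightarrow> 'v \<Rightarrow> nat" where
  "outdeg N v = length (N v)"

definition e_str :: "('v \<Rightarrow> 'v list) \<Rightarrow> 'v \<Rightarrow> nat \<Rightarrow> 'v sym list" where
  "e_str N v i = (let d = length (N v) in
      concat (replicate 4 [Pr v, Vx (N v ! ((i + d - 1) mod d))]) @ [Pr v, Vx (N v ! (i mod d))])"

definition s_str :: "'v \<Rightarrow> 'v sym list" where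
  "s_str v = replicate 4 (Vx v) @ replicate 5 (Pr v) @ [Dl v]"

definition E_block :: "('v \<Rightarrow> 'v list) \<Rightarrow> 'v \<Rightarrow> nat \<Rightarrow> 'v sym list" where
  "E_block N v start = concat (map (\<lambda>t. e_str N v ((start + t) mod length (N v))) [0..<length (N v)])"

definition nb_index :: "('v \<Rightarrow> 'v list) \<Rightarrow> 'v \<Rightarrow> 'v \<Rightarrow> nat" where
  "nb_index N v w = (THE k. k < length (N v) \<and> N v ! k = w)"

text \<open>Y = s(v_1) E_1 ... s(v_r) E_r; E_i (i<r) ends with e(v_i, v_{i+1}), i.e. starts right
  after the index of v_{i+1}; E_r starts at the (arbitrary) index j.\<close>
definition Y_str :: "('v \<Rightarrow> 'v list) \<Rightarrow> 'v list \<Rightarrow> nat \<Rightarrow> 'v sym list" where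
  "Y_str N vs j = concat (map (\<lambda>i. s_str (vs ! i) @
      (if Suc i < length vs then E_block N (vs ! i) (Suc (nb_index N (vs ! i) (vs ! Suc i)))
       else E_block N (vs ! i) j)) [0..<length vs])"

text \<open>A prefix of length l of the suffix starting at p qualifies if l \<ge> 1 and either l = 1
  (u^- empty) or u^- occurs in z at some position q < p (overlaps allowed).\<close>
definition lz_qualifies :: "'a list \<Rightarrow> nat \<Rightarrow> nat \<Rightarrow> bool" where
  "lz_qualifies z p l \<longleftrightarrow> 1 \<le> l \<and> p + l \<le> length z \<and>
     (l = 1 \<or> (\<exists>q<p. q + (l - 1) \<le> length z \<and> take (l - 1) (drop q z) = take (l - 1) (drop p z)))"

definition phrase_len :: "'a list \<Rightarrow> nat \<Rightarrow> nat" where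
  "phrase_len z p = (GREATEST l. lz_qualifies z p l)"

lemma phrase_len_pos: "p < length z \<Longrightarrow> 1 \<le> phrase_len z p"
proof -
  assume "p < length z"
  then have "lz_qualifies z p 1" by (simp add: lz_qualifies_def)
  moreover have "\<forall>y. lz_qualifies z p y \<longrightarrow> y \<le> length z" by (auto simp: lz_qualifies_def)
  ultimately have "lz_qualifies z p (GREATEST l. lz_qualifies z p l)" by (metis GreatestI_nat)
  then show ?thesis by (simp add: phrase_len_def lz_qualifies_def)
qed

function lz77_from :: "'a list \<Rightarrow> nat \<Rightarrow> 'a list list" where
  "lz77_from z p = (if length z \<le> p then []
     else take (phrase_len z p) (drop p z) # lz77_from z (p + phrase_len z p))"
  by pat_completeness auto
termination
proof (relation "measure (\<lambda>(z, p). length z - p)")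
  show "wf (measure (\<lambda>(z, p). length z - p))" by simp
next
  fix z :: "'a list" and p :: nat
  assume "\<not> length z \<le> p"
  then have "p < length z" by simp
  then have "1 \<le> phrase_len z p" by (rule phrase_len_pos)
  with \<open>p < length z\<close> show "((z, p + phrase_len z p), (z, p)) \<in> measure (\<lambda>(z, p). length z - p)"
    by simp
qed

definition lz77 :: "'a list \<Rightarrow> 'a list list" where
  "lz77 z = lz77_from z 0"

end

theory Submission
  imports Defs
begin

lemma qual_mono:
  assumes "lz_qualifies z p l" "1 \<le> l'" "l' \<le> l"
  shows "lz_qualifies z p l'"
proof (cases "l' = 1")
  case True then show ?thesis using assms by (auto simp: lz_qualifies_def)
next
  case False
  with assms have "l \<noteq> 1" by auto
  with assms obtain q where q: "q < p" "q + (l - 1) \<le> length z"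
    "take (l - 1) (drop q z) = take (l - 1) (drop p z)" by (auto simp: lz_qualifies_def)
  then have "take (l' - 1) (take (l - 1) (drop q z)) = take (l' - 1) (take (l - 1) (drop p z))" by simp
  moreover have le: "l' - 1 \<le> l - 1" using assms by simp
  ultimately have "take (l' - 1) (drop q z) = take (l' - 1) (drop p z)" by (simp add: min_absorb1)
  then show ?thesis using assms q unfolding lz_qualifies_def by (intro conjI disjI2 exI[of _ q]) auto
qed

lemma phrase_len_eqI:
  assumes "lz_qualifies z p L" "\<not> lz_qualifies z p (Suc L)"
  shows "phrase_len z p = L"
  unfolding phrase_len_def
proof (rule Greatest_equality)
  show "lz_qualifies z p L" by fact
  fix y assume y: "lz_qualifies z p y"
  show "y \<le> L"
  proof (rule ccontr)
    assume "\<not> y \<le> L"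
    then have "lz_qualifies z p (Suc L)" using qual_mono[OF y] by auto
    with assms show False by simp
  qed
qed

lemma qual_witness:
  assumes "q < p" "p + L \<le> length z" "1 \<le> L"
    "\<And>i. i < L - 1 \<Longrightarrow> z ! (q + i) = z ! (p + i)"
  shows "lz_qualifies z p L"
proof -
  have "take (L - 1) (drop q z) = take (L - 1) (drop p z)"
    by (rule nth_equalityI) (use assms in auto)
  then show ?thesis using assms unfolding lz_qualifies_def by (intro conjI disjI2 exI[of _ q]) auto
qed

lemma not_qual_fresh:
  assumes "ofs + m \<le> L" "1 \<le> m"
    "\<And>q. q < p \<Longrightarrow> q + L \<le> length z \<Longrightarrow> p + L \<le> length z \<Longrightarrow> \<exists>i<m. z ! (q + ofs + i) \<noteq> z ! (p + ofs + i)"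
  shows "\<not> lz_qualifies z p (Suc L)"
proof
  assume Q: "lz_qualifies z p (Suc L)"
  have "Suc L \<noteq> 1" using assms by auto
  with Q obtain q where q: "q < p" "q + L \<le> length z" "p + L \<le> length z"
    "take L (drop q z) = take L (drop p z)" by (auto simp: lz_qualifies_def)
  from assms(3)[OF q(1-3)] obtain i where i: "i < m" "z ! (q + ofs + i) \<noteq> z ! (p + ofs + i)" by blast
  have oi: "ofs + i < L" using i assms by simp
  have "take L (drop q z) ! (ofs + i) = take L (drop p z) ! (ofs + i)" using q by simp
  moreover have "take L (drop q z) ! (ofs + i) = z ! (q + ofs + i)"
    using oi q(1-3) by (simp add: add.assoc)
  moreover have "take L (drop p z) ! (ofs + i) = z ! (p + ofs + i)"
    using oi q(1-3) by (simp add: add.assoc)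
  ultimately have "z ! (q + ofs + i) = z ! (p + ofs + i)" by simp
  with i show False by simp
qed

lemma lz_step:
  assumes "p < length z" "phrase_len z p = L"
  shows "length (lz77_from z p) = Suc (length (lz77_from z (p + L)))"
  using assms by (subst lz77_from.simps) (simp del: lz77_from.simps)

lemma concat_map_len:
  assumes "\<And>t. t < n \<Longrightarrow> length (f t) = c"
  shows "length (concat (map f [0..<n])) = c * n"
  using assms by (induction n) auto

lemma concat_map_nth:
  assumes "\<And>t. t < n \<Longrightarrow> length (f t) = c" "t < n" "r < c"
  shows "concat (map f [0..<n]) ! (c * t + r) = f t ! r"
  using assms
proof (induction n arbitrary: t)
  case 0 then show ?case by simp
next
  case (Suc n)
  have len: "length (concat (map f [0..<n])) = c * n"
    using Suc.prems(1) by (intro concat_map_len) auto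
  show ?case
  proof (cases "t < n")
    case True
    have "c * Suc t \<le> c * n" using True by (intro mult_le_mono2) simp
    then have "c * t + r < c * n" using Suc.prems by simp
    then show ?thesis using Suc True by (simp add: nth_append len)
  next
    case False
    then have "t = n" using Suc by simp
    then show ?thesis using Suc by (simp add: nth_append len)
  qed
qed

lemma e_str_explicit:
  "e_str N v i = [Pr v, Vx (N v ! ((i + length (N v) - 1) mod length (N v))),
                  Pr v, Vx (N v ! ((i + length (N v) - 1) mod length (N v))),
                  Pr v, Vx (N v ! ((i + length (N v) - 1) mod length (N v))),
                  Pr v, Vx (N v ! ((i + length (N v) - 1) mod length (N v))),
                  Pr v, Vx (N v ! (i mod length (N v)))]"
  by (simp add: e_str_def Let_def numeral_eq_Suc)

lemma len_e_str [simp]: "length (e_str N v i) = 10"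
  by (simp add: e_str_explicit)

lemma less10: "(r::nat) < 10 \<Longrightarrow> r = 0 \<or> r = 1 \<or> r = 2 \<or> r = 3 \<or> r = 4 \<or> r = 5 \<or> r = 6 \<or> r = 7 \<or> r = 8 \<or> r = 9"
  by auto

lemma e_str_nth:
  assumes "r < 10"
  shows "e_str N v i ! r = (if even r then Pr v else if r < 8
     then Vx (N v ! ((i + length (N v) - 1) mod length (N v))) else Vx (N v ! (i mod length (N v))))"
  using less10[OF assms] unfolding e_str_explicit by (elim disjE) simp_all

lemma s_str_explicit:
  "s_str v = [Vx v, Vx v, Vx v, Vx v, Pr v, Pr v, Pr v, Pr v, Pr v, Dl v]"
  by (simp add: s_str_def numeral_eq_Suc)

lemma len_s_str [simp]: "length (s_str v) = 10"
  by (simp add: s_str_explicit)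

lemma s_str_nth:
  assumes "r < 10"
  shows "s_str v ! r = (if r < 4 then Vx v else if r < 9 then Pr v else Dl v)"
  using less10[OF assms] unfolding s_str_explicit by (elim disjE) simp_all

lemma len_E_block [simp]: "length (E_block N v s) = 10 * length (N v)"
  unfolding E_block_def by (rule concat_map_len) simp

lemma E_block_nth:
  assumes "t < length (N v)" "r < 10"
  shows "E_block N v s ! (10 * t + r) = e_str N v ((s + t) mod length (N v)) ! r"
  unfolding E_block_def using assms by (intro concat_map_nth) auto

lemma mod_pred_ne:
  fixes d x :: nat
  assumes "2 \<le> d"
  shows "(x mod d + d - 1) mod d \<noteq> x mod d"
proof -
  have xd: "x mod d < d" using assms by simp
  show ?thesis
  proof (cases "x mod d = 0")
    case True
    then show ?thesis using assms by simp
  next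
    case False
    then have "x mod d + d - 1 = (x mod d - 1) + d" using assms by simp
    moreover have "(x mod d - 1 + d) mod d = x mod d - 1"
      by (subst mod_add_self2) (rule mod_less, use xd in linarith)
    ultimately have "(x mod d + d - 1) mod d = x mod d - 1" by simp
    then show ?thesis using False by simp
  qed
qed

lemma mod_pred_Suc:
  fixes d y :: nat
  assumes "1 \<le> d"
  shows "(Suc y mod d + d - 1) mod d = y mod d"
proof -
  have "(Suc y mod d + d - 1) mod d = (Suc y mod d + (d - 1)) mod d" using assms by simp
  also have "\<dots> = (Suc y + (d - 1)) mod d" by (simp add: mod_add_left_eq)
  also have "Suc y + (d - 1) = y + d" using assms by simp
  finally show ?thesis by simp
qed

lemma mod_inj_aux:
  fixes s t t' d :: nat
  assumes "(s + t) mod d = (s + t') mod d" "t < d" "t' < d"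
  shows "t = t'"
proof (rule ccontr)
  assume ne: "t \<noteq> t'"
  have gen: "False" if "(s + a) mod d = (s + b) mod d" "a < b" "b < d" for a b
  proof -
    have "d dvd (s + b) - (s + a)" using that mod_eq_dvd_iff_nat[of "s + a" "s + b" d] by simp
    then have "d dvd b - a" by simp
    moreover have "0 < b - a" using that by simp
    ultimately have "d \<le> b - a" by (simp add: dvd_imp_le)
    then show False using that by simp
  qed
  show False
  proof (cases "t < t'")
    case True then show ?thesis using gen[of t t'] assms by simp
  next
    case False then show ?thesis using gen[of t' t] assms ne by simp
  qed
qed

declare lz77_from.simps[simp del]

lemma block:
  fixes N :: "'v \<Rightarrow> 'v list" and v :: 'v and A C z :: "'v sym list" and s0 :: nat
  assumes dist: "distinct (N v)" and noloop: "v \<notin> set (N v)" and d2: "2 \<le> length (N v)"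
    and PA: "Pr v \<notin> set A" and DA: "Dl v \<notin> set A" and lastA: "A \<noteq> [] \<Longrightarrow> last A = Vx v"
    and zdef: "z = A @ (s_str v @ E_block N v s0) @ C"
  shows "length (lz77_from z (length A)) = (if A = [] then 3 else 2) + Suc (length (N v))
           + length (lz77_from z (length A + 10 + 10 * length (N v)))"
proof -
  define a where "a = length A"
  define d where "d = length (N v)"
  define pv where "pv t = N v ! (((s0 + t) mod d + d - 1) mod d)" for t
  define cv where "cv t = N v ! ((s0 + t) mod d)" for t
  have d2': "2 \<le> d" using d2 by (simp add: d_def)
  have lenz: "length z = a + 10 + 10 * d + length C" using zdef by (simp add: a_def d_def)
  have zA: "z ! q \<in> set A" if "q < a" for q
    using that zdef by (simp add: a_def nth_append)
  have zS: "z ! (a + n) = (if n < 4 then Vx v else if n < 9 then Pr v else Dl v)" if "n < 10" for n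
    using that zdef by (simp add: a_def nth_append s_str_nth)
  have zE: "z ! (a + 10 + 10 * t + r) = (if even r then Pr v else if r < 8 then Vx (pv t) else Vx (cv t))"
    if "t < d" "r < 10" for t r
  proof -
    have m: "10 * t + r < 10 * d" using that by simp
    have "z ! (a + 10 + 10 * t + r) = (s_str v @ E_block N v s0 @ C) ! (10 + (10 * t + r))"
      using zdef by (simp add: a_def nth_append add.assoc)
    also have "\<dots> = E_block N v s0 ! (10 * t + r)" using m by (simp add: nth_append d_def)
    also have "\<dots> = e_str N v ((s0 + t) mod d) ! r" using that by (simp add: E_block_nth d_def)
    also have "\<dots> = (if even r then Pr v else if r < 8 then Vx (pv t) else Vx (cv t))"
      using that by (simp add: e_str_nth pv_def cv_def d_def)
    finally show ?thesis .
  qed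
  have zE2: "z ! P = (if even r then Pr v else if r < 8 then Vx (pv t) else Vx (cv t))"
    if "P = a + 10 + 10 * t + r" "t < d" "r < 10" for P t r
    using zE[OF that(2,3)] that(1) by simp
  have pv_ne_cv: "pv t \<noteq> cv t" for t
  proof -
    have "((s0 + t) mod d + d - 1) mod d \<noteq> (s0 + t) mod d" using mod_pred_ne[OF d2'] by simp
    moreover have "((s0 + t) mod d + d - 1) mod d < d" "(s0 + t) mod d < d" using d2' by auto
    ultimately show ?thesis using dist unfolding pv_def cv_def d_def by (simp add: nth_eq_iff_index_eq)
  qed
  have pv_Suc: "pv (Suc t) = cv t" for t
    using mod_pred_Suc[of d "s0 + t"] d2' by (simp add: pv_def cv_def)
  have cv_inj: "t = t'" if "t < d" "t' < d" "cv t = cv t'" for t t'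
  proof -
    have "(s0 + t) mod d < d" "(s0 + t') mod d < d" using d2' by auto
    then have "(s0 + t) mod d = (s0 + t') mod d" using that dist
      unfolding cv_def d_def by (simp add: nth_eq_iff_index_eq)
    then show ?thesis using mod_inj_aux that by blast
  qed
  have fresh3: False if t: "t < d" and q: "q < a + 10 + 10 * t + 7"
    and z0: "z ! q = Vx (pv t)" and z1: "z ! (q + 1) = Pr v" and z2: "z ! (q + 2) = Vx (cv t)" for t q
  proof -
    consider "q + 1 < a" | "a \<le> q + 1" "q + 1 < a + 10" | "a + 10 \<le> q + 1" by linarith
    then show False
    proof cases
      case 1 then show False using zA[of "q + 1"] z1 PA by simp
    next
      case 2
      define n where "n = q + 1 - a"
      have n: "q + 1 = a + n" "n < 10" using 2 by (auto simp: n_def)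
      have "4 \<le> n" "n < 9" using zS[of n] n z1 by (auto split: if_splits)
      then have "z ! (q + 2) = z ! (a + (n + 1))" using n by (simp add: add.assoc)
      also have "\<dots> \<noteq> Vx (cv t)" using zS[of "n + 1"] \<open>n < 9\<close> \<open>4 \<le> n\<close> by simp
      finally show False using z2 by simp
    next
      case 3
      define m where "m = q + 1 - a - 10"
      define t' where "t' = m div 10"
      define r' where "r' = m mod 10"
      have mq: "q + 1 = a + 10 + 10 * t' + r'" using 3 by (simp add: m_def t'_def r'_def)
      have mlt: "10 * t' + r' < 10 * t + 8" using mq q by linarith
      have r'10: "r' < 10" by (simp add: r'_def)
      have t'd: "t' < d" using mlt t by linarith
      have "z ! (q + 1) = z ! (a + 10 + 10 * t' + r')" by (simp only: mq)
      then have ev: "even r'"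
        using zE[OF t'd r'10] z1 by (auto split: if_splits)
      show False
      proof (cases "r' = 8")
        case True
        have "q + 2 = a + 10 + 10 * t' + 9" using mq True by simp
        then have "z ! (q + 2) = Vx (cv t')" using zE[OF t'd, of 9] by simp
        then have "t = t'" using cv_inj[OF t t'd] z2 by simp
        then show False using mlt True by simp
      next
        case False
        then have r'6: "r' + 1 < 8" using ev r'10 by presburger
        have "q + 2 = a + 10 + 10 * t' + (r' + 1)" using mq by simp
        then have zq2: "z ! (q + 2) = Vx (pv t')" using zE[OF t'd, of "r' + 1"] r'6 ev by simp
        have "z ! q = Vx (pv t')"
        proof (cases "r' = 0")
          case r0: True
          show ?thesis
          proof (cases "t' = 0")
            case True
            then have "q = a + 9" using mq r0 by simp
            then show ?thesis using zS[of 9] z0 by simp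
          next
            case False
            then have "q = a + 10 + 10 * (t' - 1) + 9" using mq r0 by simp
            then have "z ! q = Vx (cv (t' - 1))" using zE[of "t' - 1" 9] t'd by simp
            also have "cv (t' - 1) = pv t'" using pv_Suc[of "t' - 1"] False by simp
            finally show ?thesis .
          qed
        next
          case False
          then have "q = a + 10 + 10 * t' + (r' - 1)" using mq by simp
          then show ?thesis using zE[OF t'd, of "r' - 1"] r'6 ev False
            by (simp split: if_splits) presburger?
        qed
        then have "pv t = cv t" using z0 z2 zq2 by simp
        then show False using pv_ne_cv by blast
      qed
    qed
  qed
  have dpos: "1 \<le> d" using d2' by simp
  have pos_lt: "p < length z" if "p < a + 10 + 10 * d" for p using that lenz by simp
  have ph5: "phrase_len z (a + 10 + 10 * t) = 10" if t1: "1 \<le> t" and td: "t < d" for t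
  proof (rule phrase_len_eqI)
    show "lz_qualifies z (a + 10 + 10 * t) 10"
    proof (rule qual_witness[where q = "a + 8 + 10 * t"])
      show "a + 8 + 10 * t < a + 10 + 10 * t" by simp
      show "a + 10 + 10 * t + 10 \<le> length z" using lenz td by simp
      show "1 \<le> (10::nat)" by simp
      fix i :: nat assume i: "i < 10 - 1"
      show "z ! (a + 8 + 10 * t + i) = z ! (a + 10 + 10 * t + i)"
      proof (cases "i < 2")
        case True
        have tt: "t - 1 < d" using td by simp
        have eq: "a + 8 + 10 * t + i = a + 10 + 10 * (t - 1) + (8 + i)" using t1 by simp
        have "z ! (a + 8 + 10 * t + i) = (if even i then Pr v else Vx (cv (t - 1)))"
          using zE2[OF eq tt] True by simp
        moreover have "z ! (a + 10 + 10 * t + i) = (if even i then Pr v else Vx (pv t))"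
          using zE[OF td, of i] True by simp
        moreover have "pv t = cv (t - 1)" using pv_Suc[of "t - 1"] t1 by simp
        ultimately show ?thesis by simp
      next
        case False
        have eq: "a + 8 + 10 * t + i = a + 10 + 10 * t + (i - 2)" using False by simp
        have "z ! (a + 8 + 10 * t + i) = (if even (i - 2) then Pr v else if i - 2 < 8 then Vx (pv t) else Vx (cv t))"
          using zE2[OF eq td] i by simp
        moreover have "z ! (a + 10 + 10 * t + i) = (if even i then Pr v else if i < 8 then Vx (pv t) else Vx (cv t))"
          using zE[OF td, of i] i by simp
        moreover have "even (i - 2) = even i" using False by (simp add: even_diff_nat)
        moreover have "odd i \<Longrightarrow> i < 8" using i by presburger
        ultimately show ?thesis using i by auto
      qed
    qed
    show "\<not> lz_qualifies z (a + 10 + 10 * t) (Suc 10)"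
    proof (rule not_qual_fresh[where ofs = 7 and m = 3])
      fix q assume q: "q < a + 10 + 10 * t"
      show "\<exists>i<3. z ! (q + 7 + i) \<noteq> z ! (a + 10 + 10 * t + 7 + i)"
      proof (rule ccontr)
        assume "\<not> ?thesis"
        then have h: "z ! (q + 7 + i) = z ! (a + 10 + 10 * t + 7 + i)" if "i < 3" for i using that by blast
        have "z ! (q + 7) = Vx (pv t)" using h[of 0] zE2[of "a + 10 + 10 * t + 7 + 0" t 7] td by simp
        moreover have "z ! (q + 7 + 1) = Pr v" using h[of 1] zE2[of "a + 10 + 10 * t + 7 + 1" t 8] td by simp
        moreover have "z ! (q + 7 + 2) = Vx (cv t)" using h[of 2] zE2[of "a + 10 + 10 * t + 7 + 2" t 9] td by simp
        ultimately show False using fresh3[OF td, of "q + 7"] q by simp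
      qed
    qed simp_all
  qed
  have ph4: "phrase_len z (a + 12) = 8"
  proof (rule phrase_len_eqI)
    have td: "0 < d" using dpos by simp
    show "lz_qualifies z (a + 12) 8"
    proof (rule qual_witness[where q = "a + 10"])
      show "a + 12 + 8 \<le> length z" using lenz dpos by simp
      fix i :: nat assume i: "i < 8 - 1"
      have "z ! (a + 10 + i) = (if even i then Pr v else Vx (pv 0))"
        using zE[OF td, of i] i by simp
      moreover have "z ! (a + 12 + i) = (if even i then Pr v else Vx (pv 0))"
      proof -
        have "odd i \<Longrightarrow> i + 2 < 8" using i by presburger
        then show ?thesis using zE2[of "a + 12 + i" 0 "i + 2"] td i by auto
      qed
      ultimately show "z ! (a + 10 + i) = z ! (a + 12 + i)" by simp
    qed simp_all
    show "\<not> lz_qualifies z (a + 12) (Suc 8)"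
    proof (rule not_qual_fresh[where ofs = 5 and m = 3])
      fix q assume q: "q < a + 12"
      show "\<exists>i<3. z ! (q + 5 + i) \<noteq> z ! (a + 12 + 5 + i)"
      proof (rule ccontr)
        assume "\<not> ?thesis"
        then have h: "z ! (q + 5 + i) = z ! (a + 12 + 5 + i)" if "i < 3" for i using that by blast
        have "z ! (q + 5) = Vx (pv 0)" using h[of 0] zE2[of "a + 12 + 5 + 0" 0 7] td by simp
        moreover have "z ! (q + 5 + 1) = Pr v" using h[of 1] zE2[of "a + 12 + 5 + 1" 0 8] td by simp
        moreover have "z ! (q + 5 + 2) = Vx (cv 0)" using h[of 2] zE2[of "a + 12 + 5 + 2" 0 9] td by simp
        ultimately show False using fresh3[OF td, of "q + 5"] q by simp
      qed
    qed simp_all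
  qed
  have ph3: "phrase_len z (a + 10) = 2"
  proof (rule phrase_len_eqI)
    have td: "0 < d" using dpos by simp
    show "lz_qualifies z (a + 10) 2"
    proof (rule qual_witness[where q = "a + 8"])
      show "a + 10 + 2 \<le> length z" using lenz dpos by simp
      fix i :: nat assume i: "i < 2 - 1"
      then show "z ! (a + 8 + i) = z ! (a + 10 + i)"
        using zE[OF td, of 0] zS[of 8] by simp
    qed simp_all
    show "\<not> lz_qualifies z (a + 10) (Suc 2)"
    proof (rule not_qual_fresh[where ofs = 0 and m = 2])
      fix q assume q: "q < a + 10"
      show "\<exists>i<2. z ! (q + 0 + i) \<noteq> z ! (a + 10 + 0 + i)"
      proof (rule ccontr)
        assume "\<not> ?thesis"
        then have h: "z ! (q + i) = z ! (a + 10 + i)" if "i < 2" for i using that by auto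
        have z0: "z ! q = Pr v" using h[of 0] zE[OF td, of 0] by simp
        have z1: "z ! (q + 1) = Vx (pv 0)" using h[of 1] zE[OF td, of 1] by (simp add: add.assoc)
        have "a \<le> q" using z0 zA[of q] PA by (cases "q < a") auto
        then obtain n where n: "q = a + n" "n < 10" using q by (intro that[of "q - a"]) auto
        have "4 \<le> n" "n < 9" using zS[of n] n z0 by (auto split: if_splits)
        then show False using zS[of "n + 1"] z1 n by (simp add: add.assoc split: if_splits)
      qed
    qed simp_all
  qed
  have ph2: "phrase_len z (a + 5) = 5"
  proof (rule phrase_len_eqI)
    show "lz_qualifies z (a + 5) 5"
    proof (rule qual_witness[where q = "a + 4"])
      show "a + 5 + 5 \<le> length z" using lenz by simp
      fix i :: nat assume i: "i < 5 - 1"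
      then show "z ! (a + 4 + i) = z ! (a + 5 + i)"
        using zS[of "4 + i"] zS[of "5 + i"] by (simp add: add.assoc)
    qed simp_all
    show "\<not> lz_qualifies z (a + 5) (Suc 5)"
    proof (rule not_qual_fresh[where ofs = 4 and m = 1])
      fix q assume q: "q < a + 5"
      have "z ! (a + 5 + 4 + 0) = Dl v" using zS[of 9] by (simp add: add.commute)
      moreover have "z ! (q + 4 + 0) \<noteq> Dl v"
      proof (cases "q + 4 < a")
        case True then show ?thesis using zA[of "q + 4"] DA by auto
      next
        case False
        then obtain n where n: "q + 4 = a + n" "n < 9" using q by (intro that[of "q + 4 - a"]) auto
        then show ?thesis using zS[of n] by simp
      qed
      ultimately show "\<exists>i<1. z ! (q + 4 + i) \<noteq> z ! (a + 5 + 4 + i)" by auto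
    qed simp_all
  qed
  have Ecount: "length (lz77_from z (a + 10 + 10 * t)) = (d - t) + length (lz77_from z (a + 10 + 10 * d))"
    if "1 \<le> t" "t \<le> d" for t
  proof -
    have "\<forall>t. d - t = k \<longrightarrow> 1 \<le> t \<longrightarrow> t \<le> d \<longrightarrow>
      length (lz77_from z (a + 10 + 10 * t)) = (d - t) + length (lz77_from z (a + 10 + 10 * d))" for k
    proof (induction k)
      case 0 then show ?case by auto
    next
      case (Suc k)
      show ?case
      proof (intro allI impI)
        fix t assume t: "d - t = Suc k" "1 \<le> t" "t \<le> d"
        then have td: "t < d" by simp
        have "length (lz77_from z (a + 10 + 10 * t)) = Suc (length (lz77_from z (a + 10 + 10 * t + 10)))"
          by (rule lz_step[OF pos_lt ph5[OF t(2) td]]) (use td in simp)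
        also have "a + 10 + 10 * t + 10 = a + 10 + 10 * Suc t" by simp
        also have "length (lz77_from z (a + 10 + 10 * Suc t)) = (d - Suc t) + length (lz77_from z (a + 10 + 10 * d))"
        proof -
          have k: "d - Suc t = k" using t by simp
          have "length (lz77_from z (a + 10 + 10 * Suc t)) = (d - Suc t) + length (lz77_from z (a + 10 + 10 * d))"
            using Suc.IH[rule_format, OF k] td by linarith
          then show ?thesis using k by simp
        qed
        finally show "length (lz77_from z (a + 10 + 10 * t)) = (d - t) + length (lz77_from z (a + 10 + 10 * d))"
          using td by simp
      qed
    qed
    then show ?thesis using that by blast
  qed
  have Epart: "length (lz77_from z (a + 10)) = Suc d + length (lz77_from z (a + 10 + 10 * d))"
  proof -
    have "length (lz77_from z (a + 10)) = Suc (length (lz77_from z (a + 10 + 2)))"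
      by (rule lz_step[OF pos_lt ph3]) (use dpos in simp)
    also have "a + 10 + 2 = a + 12" by simp
    also have "length (lz77_from z (a + 12)) = Suc (length (lz77_from z (a + 12 + 8)))"
      by (rule lz_step[OF pos_lt ph4]) (use dpos in simp)
    also have "a + 12 + 8 = a + 10 + 10 * 1" by simp
    also have "length (lz77_from z (a + 10 + 10 * 1)) = (d - 1) + length (lz77_from z (a + 10 + 10 * d))"
      using Ecount[of 1] dpos by simp
    finally show ?thesis using dpos by simp
  qed
  have Spart2: "length (lz77_from z (a + 5)) = Suc (length (lz77_from z (a + 10)))"
  proof -
    have "length (lz77_from z (a + 5)) = Suc (length (lz77_from z (a + 5 + 5)))"
      by (rule lz_step[OF pos_lt ph2]) simp
    also have "a + 5 + 5 = a + 10" by simp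
    finally show ?thesis .
  qed
  show ?thesis
  proof (cases "A = []")
    case False
    then have apos: "0 < a" by (simp add: a_def)
    have ph1: "phrase_len z a = 5"
    proof (rule phrase_len_eqI)
      show "lz_qualifies z a 5"
      proof (rule qual_witness[where q = "a - 1"])
        show "a - 1 < a" using apos by simp
        show "a + 5 \<le> length z" using lenz by simp
        fix i :: nat assume i: "i < 5 - 1"
        show "z ! (a - 1 + i) = z ! (a + i)"
        proof (cases i)
          case 0
          have "z ! (a - 1) = A ! (a - 1)" using zdef apos by (simp add: nth_append a_def)
          also have "\<dots> = last A" using False by (simp add: last_conv_nth a_def)
          finally show ?thesis using lastA[OF False] zS[of 0] 0 by simp
        next
          case (Suc k)
          then have "a - 1 + i = a + k" using apos by simp
          then show ?thesis using zS[of k] zS[of i] i Suc by simp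
        qed
      qed simp
      show "\<not> lz_qualifies z a (Suc 5)"
      proof (rule not_qual_fresh[where ofs = 4 and m = 1])
        fix q assume q: "q < a"
        have "z ! (a + 4 + 0) = Pr v" using zS[of 4] by (simp add: add.commute)
        moreover have "z ! (q + 4 + 0) \<noteq> Pr v"
        proof (cases "q + 4 < a")
          case True then show ?thesis using zA[of "q + 4"] PA by auto
        next
          case False
          then obtain n where n: "q + 4 = a + n" "n < 4" using q by (intro that[of "q + 4 - a"]) auto
          then show ?thesis using zS[of n] by simp
        qed
        ultimately show "\<exists>i<1. z ! (q + 4 + i) \<noteq> z ! (a + 4 + i)" by auto
      qed simp_all
    qed
    have "length (lz77_from z a) = Suc (length (lz77_from z (a + 5)))"
      using lz_step[OF pos_lt ph1] by simp
    then show ?thesis using Spart2 Epart False by (simp add: a_def d_def)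
  next
    case True
    then have a0: "a = 0" by (simp add: a_def)
    have zS0: "z ! n = (if n < 4 then Vx v else if n < 9 then Pr v else Dl v)" if "n < 10" for n
      using zS[OF that] a0 by simp
    have ph0: "phrase_len z 0 = 1"
    proof (rule phrase_len_eqI)
      show "lz_qualifies z 0 1" using lenz by (simp add: lz_qualifies_def)
      show "\<not> lz_qualifies z 0 (Suc 1)" by (simp add: lz_qualifies_def)
    qed
    have ph1: "phrase_len z 1 = 4"
    proof (rule phrase_len_eqI)
      show "lz_qualifies z 1 4"
      proof (rule qual_witness[where q = 0])
        show "1 + 4 \<le> length z" using lenz by simp
        fix i :: nat assume i: "i < 4 - 1"
        then show "z ! (0 + i) = z ! (1 + i)" using zS0[of i] zS0[of "1 + i"] by simp
      qed simp_all
      show "\<not> lz_qualifies z 1 (Suc 4)"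
      proof (rule not_qual_fresh[where ofs = 3 and m = 1])
        fix q assume q: "q < (1::nat)"
        then have "q = 0" by simp
        then show "\<exists>i<1. z ! (q + 3 + i) \<noteq> z ! (1 + 3 + i)" using zS0[of 3] zS0[of 4] by auto
      qed simp_all
    qed
    have "length (lz77_from z 0) = Suc (length (lz77_from z (0 + 1)))"
      using lz_step[OF pos_lt ph0] by simp
    moreover have "length (lz77_from z 1) = Suc (length (lz77_from z (1 + 4)))"
      using lz_step[OF pos_lt ph1] by simp
    ultimately show ?thesis using Spart2 Epart True a0 by (simp add: a_def d_def)
  qed
qed

lemma nb_index_prop:
  assumes "distinct (N v)" "w \<in> set (N v)"
  shows "nb_index N v w < length (N v) \<and> N v ! nb_index N v w = w"
  unfolding nb_index_def using theI'[OF distinct_Ex1[OF assms]] .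

lemma E_block_set: "x \<in> set (E_block N v s) \<Longrightarrow> x = Pr v \<or> (\<exists>w. x = Vx w)"
  by (auto simp: E_block_def e_str_explicit split: if_splits)

lemma s_str_set: "x \<in> set (s_str v) \<Longrightarrow> x = Pr v \<or> x = Dl v \<or> x = Vx v"
  by (auto simp: s_str_explicit)

lemma E_block_last:
  assumes "1 \<le> length (N v)"
  shows "last (E_block N v s) = Vx (N v ! ((s + (length (N v) - 1)) mod length (N v)))"
proof -
  define d where "d = length (N v)"
  have len: "length (E_block N v s) - 1 = 10 * (d - 1) + 9" using assms by (simp add: d_def)
  have ne: "E_block N v s \<noteq> []" using assms by (simp add: d_def flip: length_greater_0_conv)
  have "last (E_block N v s) = E_block N v s ! (10 * (d - 1) + 9)"
    by (simp only: last_conv_nth[OF ne] len)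
  also have "\<dots> = e_str N v ((s + (d - 1)) mod d) ! 9"
    unfolding d_def using assms by (intro E_block_nth) auto
  also have "\<dots> = Vx (N v ! ((s + (d - 1)) mod d))" by (simp add: e_str_nth d_def)
  finally show ?thesis by (simp add: d_def)
qed

theorem lemma9:
  fixes N :: "'v \<Rightarrow> 'v list" and vs :: "'v list" and j :: nat
  assumes cyclic_order: "\<And>v. distinct (N v)"
    and no_loops: "\<And>v. v \<notin> set (N v)"
    and no_outdeg_one: "\<And>v. outdeg N v \<noteq> 1"
    and path_nonempty: "vs \<noteq> []"
    and path_distinct: "distinct vs"
    and path_edges: "\<And>i. Suc i < length vs \<Longrightarrow> vs ! Suc i \<in> set (N (vs ! i))"
    and last_deg: "outdeg N (last vs) \<ge> 1"
    and start: "j < outdeg N (last vs)"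
  shows "length (lz77 (Y_str N vs j)) = 3 * length vs + 1 + (\<Sum>v\<leftarrow>vs. outdeg N v)"
proof -
  define r where "r = length vs"
  define dd where "dd i = length (N (vs ! i))" for i
  define st where "st i = (if Suc i < r then Suc (nb_index N (vs ! i) (vs ! Suc i)) else j)" for i
  define blk where "blk i = s_str (vs ! i) @ E_block N (vs ! i) (st i)" for i
  define pre where "pre k = concat (map blk [0..<k])" for k
  define Y where "Y = Y_str N vs j"
  have r0: "0 < r" using path_nonempty by (simp add: r_def)
  have Ydef: "Y = concat (map blk [0..<r])"
    unfolding Y_def Y_str_def blk_def st_def r_def by (intro arg_cong[where f = concat] map_cong) auto
  have deg2: "2 \<le> dd i" if "i < r" for i
  proof -
    have "1 \<le> dd i"
    proof (cases "Suc i < r")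
      case True
      then have "vs ! Suc i \<in> set (N (vs ! i))" using path_edges by (simp add: r_def)
      then show ?thesis by (cases "N (vs ! i)") (auto simp: dd_def)
    next
      case False
      then have "i = r - 1" using that by simp
      then have "vs ! i = last vs" using path_nonempty by (simp add: r_def last_conv_nth)
      then show ?thesis using last_deg by (simp add: dd_def outdeg_def)
    qed
    moreover have "dd i \<noteq> 1" using no_outdeg_one[of "vs ! i"] by (simp add: dd_def outdeg_def)
    ultimately show ?thesis by simp
  qed
  have blk_len: "length (blk i) = 10 + 10 * dd i" for i by (simp add: blk_def dd_def)
  have pre_Suc: "pre (Suc k) = pre k @ blk k" for k by (simp add: pre_def)
  have pre_len: "length (pre (Suc k)) = length (pre k) + 10 + 10 * dd k" for k
    by (simp add: pre_Suc blk_len)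
  have pre_nil: "pre k = [] \<longleftrightarrow> k = 0" for k
  proof (cases k)
    case 0 then show ?thesis by (simp add: pre_def)
  next
    case (Suc k') then show ?thesis using pre_len[of k'] by auto
  qed
  have Pr_pre: "Pr (vs ! k) \<notin> set (pre k)" "Dl (vs ! k) \<notin> set (pre k)" if "k < r" for k
  proof -
    have inner: "vs ! k = vs ! i \<Longrightarrow> False" if "i < k" for i
      using path_distinct that \<open>k < r\<close> by (simp add: nth_eq_iff_index_eq r_def)
    have uu: "u = vs ! i" if "x \<in> set (blk i)" "x = Pr u \<or> x = Dl u" for i x u
      using that s_str_set E_block_set unfolding blk_def by fastforce
    show "Pr (vs ! k) \<notin> set (pre k)"
    proof
      assume "Pr (vs ! k) \<in> set (pre k)"
      then obtain i where "i < k" "Pr (vs ! k) \<in> set (blk i)" by (auto simp: pre_def)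
      then show False using uu inner by blast
    qed
    show "Dl (vs ! k) \<notin> set (pre k)"
    proof
      assume "Dl (vs ! k) \<in> set (pre k)"
      then obtain i where "i < k" "Dl (vs ! k) \<in> set (blk i)" by (auto simp: pre_def)
      then show False using uu inner by blast
    qed
  qed
  have lastpre: "last (pre k) = Vx (vs ! k)" if "k < r" "pre k \<noteq> []" for k
  proof -
    have "k \<noteq> 0" using that(2) pre_nil[of k] by blast
    then obtain k' where k': "k = Suc k'" using not0_implies_Suc by blast
    define u where "u = vs ! k'"
    have kr: "Suc k' < r" using that k' by simp
    have d2: "2 \<le> length (N u)" using deg2[of k'] kr by (simp add: dd_def u_def)
    have edge: "vs ! k \<in> set (N u)" using path_edges[of k'] kr k' by (simp add: r_def u_def)
    define nb where "nb = nb_index N u (vs ! k)"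
    have nb: "nb < length (N u)" "N u ! nb = vs ! k"
      using nb_index_prop[where N = N and v = u, OF cyclic_order[of u] edge] by (simp_all add: nb_def)
    have stk: "st k' = Suc nb" using kr k' by (simp add: st_def nb_def u_def)
    have Ene: "E_block N u (st k') \<noteq> []" using d2 by (simp flip: length_greater_0_conv)
    have bne: "blk k' \<noteq> []" using blk_len[of k'] by (auto simp flip: length_greater_0_conv)
    have "last (pre k) = last (blk k')" unfolding k' pre_Suc by (rule last_appendR[OF bne])
    also have "\<dots> = last (E_block N u (st k'))" unfolding blk_def u_def by (rule last_appendR) (use Ene u_def in simp)
    also have "\<dots> = Vx (N u ! ((Suc nb + (length (N u) - 1)) mod length (N u)))"
      using d2 stk by (simp add: E_block_last)
    also have "Suc nb + (length (N u) - 1) = nb + length (N u)" using d2 by simp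
    also have "(nb + length (N u)) mod length (N u) = nb" using nb by simp
    finally show ?thesis using nb by simp
  qed
  have decomp: "Y = pre k @ (s_str (vs ! k) @ E_block N (vs ! k) (st k)) @ concat (map blk [Suc k..<r])"
    if "k < r" for k
  proof -
    have "[0..<r] = [0..<k] @ [k..<r]" using upt_add_eq_append[of 0 k "r - k"] that by simp
    also have "[k..<r] = k # [Suc k..<r]" using that by (simp add: upt_conv_Cons)
    finally have "[0..<r] = [0..<k] @ k # [Suc k..<r]" .
    then have "Y = pre k @ blk k @ concat (map blk [Suc k..<r])" by (simp add: Ydef pre_def)
    then show ?thesis by (simp only: blk_def)
  qed
  have Yend: "length (lz77_from Y (length Y)) = 0" by (subst lz77_from.simps) simp
  have count: "length (lz77_from Y (length (pre k))) = (if k = 0 then 1 else 0) + 3 * (r - k) + (\<Sum>i = k..<r. dd i)"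
    if "k \<le> r" for k
  proof -
    have "\<forall>k. r - k = m \<longrightarrow> k \<le> r \<longrightarrow>
      length (lz77_from Y (length (pre k))) = (if k = 0 then 1 else 0) + 3 * (r - k) + (\<Sum>i = k..<r. dd i)" for m
    proof (induction m)
      case 0
      show ?case
      proof (intro allI impI)
        fix k assume "r - k = 0" "k \<le> r"
        then have "k = r" by simp
        then show "length (lz77_from Y (length (pre k))) = (if k = 0 then 1 else 0) + 3 * (r - k) + (\<Sum>i = k..<r. dd i)"
          using Yend r0 by (simp add: Ydef pre_def)
      qed
    next
      case (Suc m)
      show ?case
      proof (intro allI impI)
        fix k assume km: "r - k = Suc m" "k \<le> r"
        then have kr: "k < r" by simp
        have d2: "2 \<le> length (N (vs ! k))" using deg2[OF kr] by (simp add: dd_def)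
        have B: "length (lz77_from Y (length (pre k))) = (if pre k = [] then 3 else 2) + Suc (length (N (vs ! k)))
           + length (lz77_from Y (length (pre k) + 10 + 10 * length (N (vs ! k))))"
          by (rule block[OF cyclic_order no_loops d2 Pr_pre[OF kr] lastpre[OF kr] decomp[OF kr]])
        have IH: "length (lz77_from Y (length (pre (Suc k)))) = 3 * (r - Suc k) + (\<Sum>i = Suc k..<r. dd i)"
          using Suc.IH[rule_format, of "Suc k"] km by simp
        have S: "(\<Sum>i = k..<r. dd i) = dd k + (\<Sum>i = Suc k..<r. dd i)"
          using kr by (simp add: sum.atLeast_Suc_lessThan)
        have P: "length (pre k) + 10 + 10 * length (N (vs ! k)) = length (pre (Suc k))"
          by (simp add: pre_len dd_def)
        show "length (lz77_from Y (length (pre k))) = (if k = 0 then 1 else 0) + 3 * (r - k) + (\<Sum>i = k..<r. dd i)"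
        proof -
          have A3: "3 * (r - k) = 3 + 3 * (r - Suc k)" using kr by simp
          show ?thesis using B IH S P pre_nil[of k] kr A3 by (simp add: dd_def)
        qed
      qed
    qed
    then show ?thesis using that by blast
  qed
  have "length (lz77 Y) = 1 + 3 * r + (\<Sum>i = 0..<r. dd i)"
    using count[of 0] by (simp add: lz77_def pre_def)
  moreover have "(\<Sum>v\<leftarrow>vs. outdeg N v) = (\<Sum>i = 0..<r. dd i)"
    by (simp add: sum_list_sum_nth dd_def outdeg_def r_def)
  ultimately show ?thesis by (simp add: Y_def r_def)
qed

end
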